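(* Let $D$ be a digraph and $v_0\in V(D)$ such that $d^+(v_0)\ge1$ and $d^+(v)\ge2$ for every $v\in V(D)\setminus\{v_0\}$. Then $D$ contains a subdivision of $\overleftrightarrow{K}_3-e$.
   Context: Digraphs are finite, loopless, have no parallel arcs, but may contain digons. $d^+(v)$ is the out-degree of $v$. $\overleftrightarrow{K}_3$ is the bioriented triangle (both arcs between every pair of its three vertices), and $\overleftrightarrow{K}_3-e$ is obtained from it by deleting one arc. A subdivision of a digraph $F$ is obtained by replacing each arc $(x,y)$ by a directed $x$-$y$-path, with paths for different arcs internally vertex-disjoint. *)

theory Defs
  imports Main
begin

text \<open>A digraph is a pair of a vertex set V and an arc set A (a set of ordered pairs,
  so no parallel arcs; digons allowed). It is finite and loopless.\<close>
definition digraph :: "'a set \<Rightarrow> ('a \<times> 'a) set \<Rightarrow> bool" where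
  "digraph V A \<longleftrightarrow> finite V \<and> A \<subseteq> V \<times> V \<and> (\<forall>v. (v, v) \<notin> A)"

definition out_degree :: "('a \<times> 'a) set \<Rightarrow> 'a \<Rightarrow> nat" where
  "out_degree A v = card {w. (v, w) \<in> A}"

definition dipath :: "('a \<times> 'a) set \<Rightarrow> 'a list \<Rightarrow> bool" where
  "dipath A p \<longleftrightarrow> 2 \<le> length p \<and> distinct p \<and> (\<forall>i. Suc i < length p \<longrightarrow> (p ! i, p ! Suc i) \<in> A)"

definition inner_vertices :: "'a list \<Rightarrow> 'a set" where
  "inner_vertices p = set (butlast (tl p))"

text \<open>D = (V,A) contains a subdivision of F = (VF,AF): the branch vertices are embedded
  injectively, each arc (x,y) of F is realised by a directed path from the image of x to
  the image of y, and the paths are internally vertex-disjoint from each other and from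
  the branch vertices.\<close>
definition contains_subdivision ::
  "'b set \<Rightarrow> ('b \<times> 'b) set \<Rightarrow> 'a set \<Rightarrow> ('a \<times> 'a) set \<Rightarrow> bool" where
  "contains_subdivision VF AF V A \<longleftrightarrow>
     (\<exists>f P. inj_on f VF \<and> f ` VF \<subseteq> V \<and>
        (\<forall>e\<in>AF. dipath A (P e) \<and> hd (P e) = f (fst e) \<and> last (P e) = f (snd e)
                 \<and> set (P e) \<subseteq> V \<and> inner_vertices (P e) \<inter> f ` VF = {}) \<and>
        (\<forall>e\<in>AF. \<forall>e'\<in>AF. e \<noteq> e' \<longrightarrow> inner_vertices (P e) \<inter> inner_vertices (P e') = {}))"

definition K3_bi_minus_e_V :: "nat set" where
  "K3_bi_minus_e_V = {0, 1, 2}"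

definition K3_bi_minus_e_A :: "(nat \<times> nat) set" where
  "K3_bi_minus_e_A = {(x, y). x \<in> {0,1,2} \<and> y \<in> {0,1,2} \<and> x \<noteq> y} - {(0, 1)}"

end

theory Submission
  imports Defs "HOL-Library.Transitive_Closure_Table"
begin

lemma walk_iff:
  "(\<forall>i. Suc i < length p \<longrightarrow> (p ! i, p ! Suc i) \<in> A) \<longleftrightarrow> successively (\<lambda>x y. (x, y) \<in> A) p"
proof (induction p rule: induct_list012)
  case (3 x y zs)
  have "(\<forall>i. Suc i < length (x # y # zs) \<longrightarrow> ((x # y # zs) ! i, (x # y # zs) ! Suc i) \<in> A)
     \<longleftrightarrow> (x, y) \<in> A \<and> (\<forall>i. Suc i < length (y # zs) \<longrightarrow> ((y # zs) ! i, (y # zs) ! Suc i) \<in> A)"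
  proof
    assume H: "\<forall>i. Suc i < length (x # y # zs) \<longrightarrow> ((x # y # zs) ! i, (x # y # zs) ! Suc i) \<in> A"
    have "(x, y) \<in> A" using H[rule_format, of 0] by simp
    moreover have "\<forall>i. Suc i < length (y # zs) \<longrightarrow> ((y # zs) ! i, (y # zs) ! Suc i) \<in> A"
    proof (intro allI impI)
      fix i assume "Suc i < length (y # zs)"
      then show "((y # zs) ! i, (y # zs) ! Suc i) \<in> A" using H[rule_format, of "Suc i"] by simp
    qed
    ultimately show "(x, y) \<in> A \<and> (\<forall>i. Suc i < length (y # zs) \<longrightarrow> ((y # zs) ! i, (y # zs) ! Suc i) \<in> A)" by blast
  next
    assume H: "(x, y) \<in> A \<and> (\<forall>i. Suc i < length (y # zs) \<longrightarrow> ((y # zs) ! i, (y # zs) ! Suc i) \<in> A)"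
    show "\<forall>i. Suc i < length (x # y # zs) \<longrightarrow> ((x # y # zs) ! i, (x # y # zs) ! Suc i) \<in> A"
    proof (intro allI impI)
      fix i assume "Suc i < length (x # y # zs)"
      then show "((x # y # zs) ! i, (x # y # zs) ! Suc i) \<in> A"
        using H by (cases i) auto
    qed
  qed
  then show ?case using 3 by simp
qed auto

lemma dipath_iff:
  "dipath A p \<longleftrightarrow> 2 \<le> length p \<and> distinct p \<and> successively (\<lambda>x y. (x, y) \<in> A) p"
  unfolding dipath_def walk_iff by simp

lemma set_inner:
  assumes "2 \<le> length p"
  shows "set p = inner_vertices p \<union> {hd p, last p}"
proof -
  obtain a r where p: "p = a # r" using assms by (cases p) auto
  have r: "r \<noteq> []" using assms p by auto
  have "set r = set (butlast r @ [last r])" using r by simp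
  then have "set r = set (butlast r) \<union> {last r}" by simp
  then show ?thesis using p r by (auto simp: inner_vertices_def)
qed

lemma inner_distinct:
  assumes "2 \<le> length p" "distinct p"
  shows "inner_vertices p = set p - {hd p, last p}"
proof -
  obtain a r where p: "p = a # r" using assms by (cases p) auto
  have r: "r \<noteq> []" using assms p by auto
  have rr: "r = butlast r @ [last r]" using r by simp
  have "distinct r" using assms(2) p by simp
  then have "distinct (butlast r @ [last r])" using rr by simp
  then have "last r \<notin> set (butlast r)" by simp
  moreover have "a \<notin> set r" using assms(2) p by simp
  moreover have "set r = set (butlast r) \<union> {last r}"
  proof -
    have "set r = set (butlast r @ [last r])" using r by simp
    then show ?thesis by simp
  qed
  ultimately show ?thesis using p r by (auto simp: inner_vertices_def)
qed

lemma subI: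
  assumes "inj_on f VF" "f ` VF \<subseteq> V"
    and "\<And>e. e \<in> AF \<Longrightarrow> dipath A (P e)"
    and "\<And>e. e \<in> AF \<Longrightarrow> hd (P e) = f (fst e)"
    and "\<And>e. e \<in> AF \<Longrightarrow> last (P e) = f (snd e)"
    and "\<And>e. e \<in> AF \<Longrightarrow> set (P e) \<subseteq> V"
    and "\<And>e. e \<in> AF \<Longrightarrow> inner_vertices (P e) \<inter> f ` VF = {}"
    and "\<And>e e'. e \<in> AF \<Longrightarrow> e' \<in> AF \<Longrightarrow> e \<noteq> e' \<Longrightarrow> inner_vertices (P e) \<inter> inner_vertices (P e') = {}"
  shows "contains_subdivision VF AF V A"
  unfolding contains_subdivision_def
  apply (rule exI[of _ f], rule exI[of _ P])
  apply (intro conjI ballI impI)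
  using assms by simp_all

lemma subE:
  assumes "contains_subdivision VF AF V A"
  obtains f P where "inj_on f VF" "f ` VF \<subseteq> V"
    and "\<And>e. e \<in> AF \<Longrightarrow> dipath A (P e)"
    and "\<And>e. e \<in> AF \<Longrightarrow> hd (P e) = f (fst e)"
    and "\<And>e. e \<in> AF \<Longrightarrow> last (P e) = f (snd e)"
    and "\<And>e. e \<in> AF \<Longrightarrow> set (P e) \<subseteq> V"
    and "\<And>e. e \<in> AF \<Longrightarrow> inner_vertices (P e) \<inter> f ` VF = {}"
    and "\<And>e e'. e \<in> AF \<Longrightarrow> e' \<in> AF \<Longrightarrow> e \<noteq> e' \<Longrightarrow> inner_vertices (P e) \<inter> inner_vertices (P e') = {}"
proof -
  from assms obtain f P where H: "inj_on f VF" "f ` VF \<subseteq> V"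
    "\<forall>e\<in>AF. dipath A (P e) \<and> hd (P e) = f (fst e) \<and> last (P e) = f (snd e)
                 \<and> set (P e) \<subseteq> V \<and> inner_vertices (P e) \<inter> f ` VF = {}"
    "\<forall>e\<in>AF. \<forall>e'\<in>AF. e \<noteq> e' \<longrightarrow> inner_vertices (P e) \<inter> inner_vertices (P e') = {}"
    unfolding contains_subdivision_def by (elim exE conjE) (rule that)
  show thesis
    apply (rule that[of f P])
    using H by simp_all
qed

lemma sub_mono:
  assumes "contains_subdivision VF AF V1 A1" "V1 \<subseteq> V" "A1 \<subseteq> A"
  shows "contains_subdivision VF AF V A"
  using assms(1)
proof (rule subE)
  fix f P assume H: "inj_on f VF" "f ` VF \<subseteq> V1"
    and "\<And>e. e \<in> AF \<Longrightarrow> dipath A1 (P e)"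
    and "\<And>e. e \<in> AF \<Longrightarrow> hd (P e) = f (fst e)"
    and "\<And>e. e \<in> AF \<Longrightarrow> last (P e) = f (snd e)"
    and "\<And>e. e \<in> AF \<Longrightarrow> set (P e) \<subseteq> V1"
    and "\<And>e. e \<in> AF \<Longrightarrow> inner_vertices (P e) \<inter> f ` VF = {}"
    and "\<And>e e'. e \<in> AF \<Longrightarrow> e' \<in> AF \<Longrightarrow> e \<noteq> e' \<Longrightarrow> inner_vertices (P e) \<inter> inner_vertices (P e') = {}"
  note HH = this
  show ?thesis
  proof (rule subI[of f])
    fix e assume "e \<in> AF"
    then have "dipath A1 (P e)" by (rule HH(3))
    then show "dipath A (P e)" unfolding dipath_def using assms(3) by blast
  next
    show "inj_on f VF" by (rule HH(1))
  next
    show "f ` VF \<subseteq> V" using HH(2) assms(2) by (rule subset_trans)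
  next
    fix e assume "e \<in> AF" then show "hd (P e) = f (fst e)" by (rule HH(4))
  next
    fix e assume "e \<in> AF" then show "last (P e) = f (snd e)" by (rule HH(5))
  next
    fix e assume "e \<in> AF" then have "set (P e) \<subseteq> V1" by (rule HH(6))
    then show "set (P e) \<subseteq> V" using assms(2) by (rule subset_trans)
  next
    fix e assume "e \<in> AF" then show "inner_vertices (P e) \<inter> f ` VF = {}" by (rule HH(7))
  next
    fix e e' assume "e \<in> AF" "e' \<in> AF" "e \<noteq> e'"
    then show "inner_vertices (P e) \<inter> inner_vertices (P e') = {}" by (rule HH(8))
  qed
qed

lemma succ_avoid:
  assumes "successively (\<lambda>x y. (x, y) \<in> A1) p" "\<not> (\<exists>xs ys. p = xs @ u # t # ys)"
    "A1 \<subseteq> A \<union> {(u, t)}"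
  shows "successively (\<lambda>x y. (x, y) \<in> A) p"
  using assms(1,2)
proof (induction p rule: induct_list012)
  case (3 x y zs)
  have xy: "(x, y) \<in> A1" and s: "successively (\<lambda>x y. (x, y) \<in> A1) (y # zs)" using 3(3) by simp_all
  have "(x, y) \<noteq> (u, t)"
  proof
    assume "(x, y) = (u, t)"
    then have "x # y # zs = [] @ u # t # zs" by simp
    then show False using 3(4) by blast
  qed
  then have "(x, y) \<in> A" using xy assms(3) by blast
  moreover have "\<not> (\<exists>xs ys. y # zs = xs @ u # t # ys)"
  proof
    assume "\<exists>xs ys. y # zs = xs @ u # t # ys"
    then obtain xs ys where "y # zs = xs @ u # t # ys" by blast
    then have "x # y # zs = (x # xs) @ u # t # ys" by simp
    then show False using 3(4) by blast
  qed
  ultimately show ?case using 3(2) s by simp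
qed auto

lemma ins_dipath:
  assumes "dipath A1 p" "p = xs @ u # t # ys" "v \<notin> set p" "(u, v) \<in> A" "(v, t) \<in> A"
    "A1 \<subseteq> A \<union> {(u, t)}"
  shows "dipath A (xs @ u # v # t # ys)"
proof -
  have d: "distinct p" and s: "successively (\<lambda>x y. (x, y) \<in> A1) p"
    using assms(1) unfolding dipath_iff by simp_all
  have ux: "u \<notin> set xs" and ut: "u \<notin> set (t # ys)" using d assms(2) by auto
  have s1: "successively (\<lambda>x y. (x, y) \<in> A1) xs" and s2: "successively (\<lambda>x y. (x, y) \<in> A1) (t # ys)"
    and s3: "xs \<noteq> [] \<Longrightarrow> (last xs, u) \<in> A1" and s4: "(u, t) \<in> A1"
    using s assms(2) by (auto simp: successively_append_iff)
  have r1: "successively (\<lambda>x y. (x, y) \<in> A) xs"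
    by (rule successively_mono[OF s1]) (use ux assms(6) in blast)
  have r2: "successively (\<lambda>x y. (x, y) \<in> A) (t # ys)"
    by (rule successively_mono[OF s2]) (use ut assms(6) in blast)
  have r3: "xs \<noteq> [] \<Longrightarrow> (last xs, u) \<in> A"
  proof -
    assume ne: "xs \<noteq> []"
    then have "last xs \<in> set xs" by simp
    then have "last xs \<noteq> u" using ux by blast
    then show "(last xs, u) \<in> A" using s3[OF ne] assms(6) by blast
  qed
  have r4: "successively (\<lambda>x y. (x, y) \<in> A) (u # v # t # ys)"
    using r2 assms(4,5) by simp
  have "successively (\<lambda>x y. (x, y) \<in> A) (xs @ u # v # t # ys)"
    using r1 r3 r4 by (auto simp: successively_append_iff)
  moreover have "distinct (xs @ u # v # t # ys)" using d assms(2,3) by auto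
  ultimately show ?thesis unfolding dipath_iff by simp
qed

lemma ins_inner:
  assumes "dipath A1 p" "p = xs @ u # t # ys" "v \<notin> set p"
  shows "inner_vertices (xs @ u # v # t # ys) = insert v (inner_vertices p)"
proof -
  have d: "distinct p" and l: "2 \<le> length p" using assms(1) unfolding dipath_iff by simp_all
  have d2: "distinct (xs @ u # v # t # ys)" using d assms(2,3) by auto
  have h: "hd (xs @ u # v # t # ys) = hd p" using assms(2) by (cases xs) auto
  have la: "last (xs @ u # v # t # ys) = last p" using assms(2) by simp
  have "hd p \<in> set p" "last p \<in> set p" using l by (auto intro: hd_in_set last_in_set)
  then have "v \<noteq> hd p" "v \<noteq> last p" using assms(3) by auto
  moreover have "set (xs @ u # v # t # ys) = insert v (set p)" using assms(2) by auto
  ultimately show ?thesis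
    using inner_distinct[OF _ d2] inner_distinct[OF l d] h la by auto
qed

lemma lift:
  assumes S: "contains_subdivision VF AF V1 A1"
    and V1: "V1 \<subseteq> V" and vV: "v \<in> V" and vV1: "v \<notin> V1"
    and uv: "(u, v) \<in> A" and vt: "(v, t) \<in> A" and A1: "A1 \<subseteq> A \<union> {(u, t)}"
    and AF: "AF \<subseteq> VF \<times> VF"
  shows "contains_subdivision VF AF V A"
  using S
proof (rule subE)
  fix f P assume H1: "inj_on f VF" and H2: "f ` VF \<subseteq> V1"
    and H3: "\<And>e. e \<in> AF \<Longrightarrow> dipath A1 (P e)"
    and H4: "\<And>e. e \<in> AF \<Longrightarrow> hd (P e) = f (fst e)"
    and H5: "\<And>e. e \<in> AF \<Longrightarrow> last (P e) = f (snd e)"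
    and H6: "\<And>e. e \<in> AF \<Longrightarrow> set (P e) \<subseteq> V1"
    and H7: "\<And>e. e \<in> AF \<Longrightarrow> inner_vertices (P e) \<inter> f ` VF = {}"
    and H8: "\<And>e e'. e \<in> AF \<Longrightarrow> e' \<in> AF \<Longrightarrow> e \<noteq> e' \<Longrightarrow> inner_vertices (P e) \<inter> inner_vertices (P e') = {}"
  define has where "has e \<longleftrightarrow> (\<exists>xs ys. P e = xs @ u # t # ys)" for e
  define P' where "P' e = (if has e then (SOME q. \<exists>xs ys. P e = xs @ u # t # ys \<and> q = xs @ u # v # t # ys) else P e)" for e
  have vnot: "v \<notin> set (P e)" if "e \<in> AF" for e using H6[OF that] vV1 by blast
  have props: "dipath A (P' e) \<and> hd (P' e) = hd (P e) \<and> last (P' e) = last (P e)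
      \<and> set (P' e) \<subseteq> insert v (set (P e))
      \<and> inner_vertices (P' e) \<subseteq> insert v (inner_vertices (P e))
      \<and> (v \<in> inner_vertices (P' e) \<longrightarrow> has e)" if e: "e \<in> AF" for e
  proof (cases "has e")
    case True
    then have ex: "\<exists>q. \<exists>xs ys. P e = xs @ u # t # ys \<and> q = xs @ u # v # t # ys"
      unfolding has_def by blast
    have "\<exists>xs ys. P e = xs @ u # t # ys \<and> P' e = xs @ u # v # t # ys"
      unfolding P'_def using True someI_ex[OF ex] by simp
    then obtain xs ys where pe: "P e = xs @ u # t # ys" and pe': "P' e = xs @ u # v # t # ys" by blast
    have "dipath A (P' e)" unfolding pe' by (rule ins_dipath[OF H3[OF e] pe vnot[OF e] uv vt A1])
    moreover have "hd (P' e) = hd (P e)" unfolding pe pe' by (cases xs) auto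
    moreover have "last (P' e) = last (P e)" unfolding pe pe' by simp
    moreover have "set (P' e) \<subseteq> insert v (set (P e))" unfolding pe pe' by auto
    moreover have "inner_vertices (P' e) \<subseteq> insert v (inner_vertices (P e))"
      unfolding pe' using ins_inner[OF H3[OF e] pe vnot[OF e]] by simp
    ultimately show ?thesis using True by blast
  next
    case False
    then have pe: "P' e = P e" unfolding P'_def by simp
    have d: "dipath A1 (P e)" by (rule H3[OF e])
    then have "successively (\<lambda>x y. (x, y) \<in> A) (P e)"
      using succ_avoid[of A1 "P e" u t A] False A1 unfolding dipath_iff has_def by blast
    then have "dipath A (P e)" using d unfolding dipath_iff by simp
    moreover have "v \<notin> inner_vertices (P e)"
      using vnot[OF e] d unfolding dipath_iff using set_inner[of "P e"] by blast
    ultimately show ?thesis unfolding pe by blast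
  qed
  have fV: "f x \<in> f ` VF" if "x \<in> VF" for x using that by blast
  have key: "False" if e: "e \<in> AF" and e': "e' \<in> AF" and ne: "e \<noteq> e'"
    and w1: "w \<in> inner_vertices (P e)" and w2: "w \<in> set (P e')" for e e' w
  proof -
    have l2: "2 \<le> length (P e')" using H3[OF e'] unfolding dipath_iff by simp
    have "w \<in> inner_vertices (P e') \<or> w = hd (P e') \<or> w = last (P e')"
      using set_inner[OF l2] w2 by blast
    then show False
    proof (elim disjE)
      assume "w \<in> inner_vertices (P e')"
      then show False using H8[OF e e' ne] w1 by blast
    next
      assume "w = hd (P e')"
      then have "w \<in> f ` VF" using H4[OF e'] e' AF by auto
      then show False using H7[OF e] w1 by blast
    next
      assume "w = last (P e')"
      then have "w \<in> f ` VF" using H5[OF e'] e' AF by auto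
      then show False using H7[OF e] w1 by blast
    qed
  qed
  have ends: "u = f (fst e) \<and> t = f (snd e)"
    if e: "e \<in> AF" and e': "e' \<in> AF" and ne: "e \<noteq> e'" and he: "has e" and he': "has e'" for e e'
  proof -
    obtain xs ys where pe: "P e = xs @ u # t # ys" using he unfolding has_def by blast
    obtain xs' ys' where pe': "P e' = xs' @ u # t # ys'" using he' unfolding has_def by blast
    have l2: "2 \<le> length (P e)" and d: "distinct (P e)" using H3[OF e] unfolding dipath_iff by simp_all
    have "u \<in> set (P e')" "t \<in> set (P e')" unfolding pe' by auto
    then have "u \<notin> inner_vertices (P e)" "t \<notin> inner_vertices (P e)"
      using key[OF e e' ne] by blast+
    moreover have "u \<in> set (P e)" "t \<in> set (P e)" unfolding pe by auto
    ultimately have u1: "u = hd (P e) \<or> u = last (P e)" and t1: "t = hd (P e) \<or> t = last (P e)"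
      using set_inner[OF l2] by blast+
    have "u \<noteq> last (P e)"
    proof -
      have "last (P e) \<in> set (t # ys)" unfolding pe by simp
      moreover have "u \<notin> set (t # ys)" using d unfolding pe by auto
      ultimately show ?thesis by blast
    qed
    moreover have "t \<noteq> hd (P e)"
    proof (cases xs)
      case Nil
      then show ?thesis using d unfolding pe by auto
    next
      case (Cons a as)
      then have "hd (P e) \<in> set xs" unfolding pe by simp
      moreover have "t \<notin> set xs" using d unfolding pe by auto
      ultimately show ?thesis by blast
    qed
    ultimately show ?thesis using u1 t1 H4[OF e] H5[OF e] by auto
  qed
  show ?thesis
  proof (rule subI[of f VF V AF A P'])
    show "inj_on f VF" by (rule H1)
  next
    show "f ` VF \<subseteq> V" using H2 V1 by (rule subset_trans)
  next
    fix e assume "e \<in> AF" then show "dipath A (P' e)" using props by blast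
  next
    fix e assume "e \<in> AF" then show "hd (P' e) = f (fst e)" using props H4 by metis
  next
    fix e assume "e \<in> AF" then show "last (P' e) = f (snd e)" using props H5 by metis
  next
    fix e assume e: "e \<in> AF"
    then have "set (P' e) \<subseteq> insert v (set (P e))" using props by blast
    then show "set (P' e) \<subseteq> V" using H6[OF e] V1 vV by blast
  next
    fix e assume e: "e \<in> AF"
    then have "inner_vertices (P' e) \<subseteq> insert v (inner_vertices (P e))" using props by blast
    moreover have "v \<notin> f ` VF" using H2 vV1 by blast
    ultimately show "inner_vertices (P' e) \<inter> f ` VF = {}" using H7[OF e] by blast
  next
    fix e e' assume e: "e \<in> AF" and e': "e' \<in> AF" and ne: "e \<noteq> e'"
    show "inner_vertices (P' e) \<inter> inner_vertices (P' e') = {}"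
    proof (rule ccontr)
      assume "inner_vertices (P' e) \<inter> inner_vertices (P' e') \<noteq> {}"
      then obtain w where w1: "w \<in> inner_vertices (P' e)" and w2: "w \<in> inner_vertices (P' e')" by blast
      have i1: "inner_vertices (P' e) \<subseteq> insert v (inner_vertices (P e))" using props[OF e] by blast
      have i2: "inner_vertices (P' e') \<subseteq> insert v (inner_vertices (P e'))" using props[OF e'] by blast
      show False
      proof (cases "w = v")
        case True
        then have "has e" "has e'" using props[OF e] props[OF e'] w1 w2 by blast+
        then have "u = f (fst e) \<and> t = f (snd e)" "u = f (fst e') \<and> t = f (snd e')"
          using ends[OF e e' ne] ends[OF e' e ne[symmetric]] by blast+
        then have "f (fst e) = f (fst e')" "f (snd e) = f (snd e')" by simp_all
        moreover have "fst e \<in> VF" "snd e \<in> VF" "fst e' \<in> VF" "snd e' \<in> VF" using e e' AF by auto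
        ultimately have "fst e = fst e'" "snd e = snd e'" using H1 unfolding inj_on_def by blast+
        then show False using ne by (simp add: prod_eq_iff)
      next
        case False
        then have "w \<in> inner_vertices (P e)" "w \<in> inner_vertices (P e')" using w1 w2 i1 i2 by blast+
        then show False using H8[OF e e' ne] by blast
      qed
    qed
  qed
qed

lemma K3A_eq: "K3_bi_minus_e_A = {(0,2),(2,0),(1,0),(1,2),(2,1)}"
  unfolding K3_bi_minus_e_A_def by auto

lemma K3A_sub: "K3_bi_minus_e_A \<subseteq> K3_bi_minus_e_V \<times> K3_bi_minus_e_V"
  unfolding K3A_eq K3_bi_minus_e_V_def by auto

lemma dipath_two: "(x, y) \<in> A \<Longrightarrow> x \<noteq> y \<Longrightarrow> dipath A [x, y]"
  unfolding dipath_iff by simp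

lemma inner_two: "inner_vertices [x, y] = {}"
  unfolding inner_vertices_def by simp

lemma k3_direct:
  assumes Q: "dipath A Q" "hd Q = b" "last Q = a" "c \<notin> set Q" "set Q \<subseteq> V"
    and arcs: "(a, b) \<in> A" "(a, c) \<in> A" "(c, a) \<in> A" "(c, b) \<in> A"
    and ne: "a \<noteq> b" "a \<noteq> c" "b \<noteq> c"
    and V: "a \<in> V" "b \<in> V" "c \<in> V"
  shows "contains_subdivision K3_bi_minus_e_V K3_bi_minus_e_A V A"
proof -
  define f :: "nat \<Rightarrow> 'a" where "f n = (if n = 0 then b else if n = 1 then c else a)" for n
  define P where "P e = (if e = (0::nat, 2::nat) then Q else [f (fst e), f (snd e)])" for e
  have fimg: "f ` K3_bi_minus_e_V = {a, b, c}" unfolding K3_bi_minus_e_V_def f_def by auto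
  have l2: "2 \<le> length Q" and dQ: "distinct Q" using Q(1) unfolding dipath_iff by simp_all
  have innQ: "inner_vertices Q = set Q - {b, a}" using inner_distinct[OF l2 dQ] Q(2,3) by simp
  have inn: "inner_vertices (P e) = {}" if "e \<noteq> (0, 2)" for e
    unfolding P_def using that inner_two by simp
  show ?thesis
  proof (rule subI[of f _ _ _ _ P])
    show "inj_on f K3_bi_minus_e_V" unfolding inj_on_def K3_bi_minus_e_V_def f_def using ne by auto
  next
    show "f ` K3_bi_minus_e_V \<subseteq> V" unfolding fimg using V by blast
  next
    fix e assume "e \<in> K3_bi_minus_e_A"
    then show "dipath A (P e)" unfolding K3A_eq P_def f_def
      using Q(1) arcs ne by (auto intro!: dipath_two)
  next
    fix e assume "e \<in> K3_bi_minus_e_A"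
    then show "hd (P e) = f (fst e)" unfolding K3A_eq P_def f_def using Q(2) by auto
  next
    fix e assume "e \<in> K3_bi_minus_e_A"
    then show "last (P e) = f (snd e)" unfolding K3A_eq P_def f_def using Q(3) by auto
  next
    fix e assume "e \<in> K3_bi_minus_e_A"
    then show "set (P e) \<subseteq> V" unfolding K3A_eq P_def f_def using Q(5) V by auto
  next
    fix e assume "e \<in> K3_bi_minus_e_A"
    show "inner_vertices (P e) \<inter> f ` K3_bi_minus_e_V = {}"
    proof (cases "e = (0, 2)")
      case True
      then show ?thesis unfolding fimg P_def using innQ Q(4) by auto
    next
      case False
      then show ?thesis using inn by simp
    qed
  next
    fix e e' assume "e \<in> K3_bi_minus_e_A" "e' \<in> K3_bi_minus_e_A" "e \<noteq> e'"
    then have "e \<noteq> (0, 2) \<or> e' \<noteq> (0, 2)" by blast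
    then show "inner_vertices (P e) \<inter> inner_vertices (P e') = {}"
    proof
      assume "e \<noteq> (0, 2)" then show ?thesis using inn[of e] by simp
    next
      assume "e' \<noteq> (0, 2)" then show ?thesis using inn[of e'] by simp
    qed
  qed
qed

lemma rtp_props:
  "rtrancl_path r x xs y \<Longrightarrow> successively r (x # xs) \<and> last (x # xs) = y \<and> (\<forall>z\<in>set xs. \<exists>a. r a z)"
proof (induction rule: rtrancl_path.induct)
  case (base x)
  then show ?case by simp
next
  case (step x y ys z)
  then show ?case by (cases ys) auto
qed

lemma reach_path:
  assumes "(\<lambda>a b. (a, b) \<in> A \<and> b \<noteq> v)\<^sup>*\<^sup>* x y" "x \<noteq> y" "x \<noteq> v"
  obtains Q where "dipath A Q" "hd Q = x" "last Q = y" "v \<notin> set Q"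
    "\<forall>z\<in>set Q. z = x \<or> (\<exists>a. (a, z) \<in> A)"
proof -
  let ?r = "\<lambda>a b. (a, b) \<in> A \<and> b \<noteq> v"
  obtain xs where xs: "rtrancl_path ?r x xs y" using assms(1) unfolding rtranclp_eq_rtrancl_path by blast
  from xs obtain ys where p: "rtrancl_path ?r x ys y" and d: "distinct (x # ys)" and "set ys \<subseteq> set xs"
    by (rule rtrancl_path_distinct)
  have P: "successively ?r (x # ys)" "last (x # ys) = y" "\<forall>z\<in>set ys. \<exists>a. ?r a z"
    using rtp_props[OF p] by blast+
  have "ys \<noteq> []" using P(2) assms(2) by auto
  then have l: "2 \<le> length (x # ys)" by (cases ys) auto
  have s: "successively (\<lambda>a b. (a, b) \<in> A) (x # ys)"
    by (rule successively_mono[OF P(1)]) blast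
  show thesis
  proof (rule that[of "x # ys"])
    show "dipath A (x # ys)" unfolding dipath_iff using l d s by blast
  next
    show "hd (x # ys) = x" by simp
  next
    show "last (x # ys) = y" by (rule P(2))
  next
    show "v \<notin> set (x # ys)" using P(3) assms(3) by auto
  next
    show "\<forall>z\<in>set (x # ys). z = x \<or> (\<exists>a. (a, z) \<in> A)" using P(3) by auto
  qed
qed

lemma sum_out:
  assumes "finite V" "A \<subseteq> V \<times> V"
  shows "card A = (\<Sum>x\<in>V. out_degree A x)"
proof -
  have "A = (SIGMA x:V. {w. (x, w) \<in> A})" using assms(2) by auto
  moreover have "\<forall>x\<in>V. finite {w. (x, w) \<in> A}"
  proof
    fix x assume "x \<in> V"
    have "{w. (x, w) \<in> A} \<subseteq> V" using assms(2) by auto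
    then show "finite {w. (x, w) \<in> A}" using assms(1) finite_subset by blast
  qed
  ultimately have "card A = (\<Sum>x\<in>V. card {w. (x, w) \<in> A})"
    using assms(1) card_SigmaI[of V "\<lambda>x. {w. (x, w) \<in> A}"] by simp
  then show ?thesis unfolding out_degree_def .
qed

lemma sum_in:
  assumes "finite V" "A \<subseteq> V \<times> V"
  shows "card A = (\<Sum>x\<in>V. card {y. (y, x) \<in> A})"
proof -
  have c: "converse A = (\<lambda>(x, y). (y, x)) ` A" by auto
  have "inj_on (\<lambda>(x, y). (y, x)) A" unfolding inj_on_def by auto
  then have "card (converse A) = card A" unfolding c by (rule card_image)
  moreover have "converse A \<subseteq> V \<times> V" using assms(2) by auto
  ultimately have "card A = (\<Sum>x\<in>V. out_degree (converse A) x)" using sum_out[OF assms(1), of "converse A"] by simp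
  moreover have "out_degree (converse A) x = card {y. (y, x) \<in> A}" for x
    unfolding out_degree_def by simp
  ultimately show ?thesis by simp
qed

lemma out_sub:
  assumes "x \<in> X"
  shows "out_degree (A \<inter> X \<times> X) x = card ({w. (x, w) \<in> A} \<inter> X)"
proof -
  have "{w. (x, w) \<in> A \<inter> X \<times> X} = {w. (x, w) \<in> A} \<inter> X" using assms by auto
  then show ?thesis unfolding out_degree_def by simp
qed

lemma digraph_sub:
  assumes "digraph V A" "X \<subseteq> V"
  shows "digraph X (A \<inter> X \<times> X)"
  using assms unfolding digraph_def by (auto intro: finite_subset)

lemma main:
  fixes V :: "'a set" and A :: "('a \<times> 'a) set" and v0 :: 'a
  assumes "digraph V A" "v0 \<in> V" "1 \<le> out_degree A v0" "\<forall>v \<in> V - {v0}. 2 \<le> out_degree A v"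
  shows "contains_subdivision K3_bi_minus_e_V K3_bi_minus_e_A V A"
  using assms
proof (induction "card A" arbitrary: V A v0 rule: less_induct)
  case less
  have IH: "contains_subdivision K3_bi_minus_e_V K3_bi_minus_e_A X B"
    if "card B < card A" "digraph X B" "e \<in> X" "1 \<le> out_degree B e" "\<forall>x\<in>X - {e}. 2 \<le> out_degree B x"
    for X :: "'a set" and B e
    using that by (rule less.hyps)
  have dg: "digraph V A" by (rule less.prems(1))
  have finV: "finite V" and AV: "A \<subseteq> V \<times> V" and loop: "\<And>x. (x, x) \<notin> A"
    using dg unfolding digraph_def by auto
  have finA: "finite A" using finV AV finite_subset by blast
  have v0V: "v0 \<in> V" by (rule less.prems(2))
  define N where "N x = {w. (x, w) \<in> A}" for x
  have NV: "N x \<subseteq> V" for x using AV unfolding N_def by auto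
  have finN: "finite (N x)" for x using NV finV finite_subset by blast
  have od: "out_degree A x = card (N x)" for x unfolding N_def out_degree_def by simp
  have deg0: "1 \<le> card (N v0)" using less.prems(3) od by simp
  have deg: "2 \<le> card (N x)" if "x \<in> V" "x \<noteq> v0" for x using less.prems(4) that od by simp
  have red: "contains_subdivision K3_bi_minus_e_V K3_bi_minus_e_A V A"
    if X: "X \<subseteq> V" "e \<in> X" "1 \<le> out_degree (A \<inter> X \<times> X) e"
      "\<forall>x\<in>X - {e}. 2 \<le> out_degree (A \<inter> X \<times> X) x" "card (A \<inter> X \<times> X) < card A" for X e
  proof -
    have "contains_subdivision K3_bi_minus_e_V K3_bi_minus_e_A X (A \<inter> X \<times> X)"
      by (rule IH[OF X(5) digraph_sub[OF dg X(1)] X(2) X(3) X(4)])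
    then show ?thesis using X(1) by (rule sub_mono) blast
  qed
  show ?case
  proof (cases "\<exists>x\<in>V. card (N x) > (if x = v0 then 1 else 2)")
    case True
    then obtain x where xV: "x \<in> V" and big: "card (N x) > (if x = v0 then 1 else 2)" by blast
    then have "N x \<noteq> {}" by (metis card.empty not_less_zero)
    then obtain w where w: "w \<in> N x" by blast
    define A1 where "A1 = A - {(x, w)}"
    have xw: "(x, w) \<in> A" using w unfolding N_def by simp
    have c1: "card A1 < card A" unfolding A1_def using finA xw by (rule card_Diff1_less)
    have dg1: "digraph V A1" using dg unfolding digraph_def A1_def by auto
    have N1: "{w'. (y, w') \<in> A1} = (if y = x then N x - {w} else N y)" for y
      unfolding A1_def N_def by auto
    have od1: "out_degree A1 y = (if y = x then card (N x) - 1 else card (N y))" for y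
      unfolding out_degree_def N1 using w finN by (simp add: card_Diff_singleton)
    have "1 \<le> out_degree A1 v0" using od1[of v0] deg0 big by (auto split: if_splits)
    moreover have "\<forall>y\<in>V - {v0}. 2 \<le> out_degree A1 y"
    proof
      fix y assume y: "y \<in> V - {v0}"
      then have "2 \<le> card (N y)" using deg by blast
      then show "2 \<le> out_degree A1 y" using od1[of y] big y by (auto split: if_splits)
    qed
    ultimately have "contains_subdivision K3_bi_minus_e_V K3_bi_minus_e_A V A1"
      using IH[OF c1 dg1 v0V] by blast
    then show ?thesis by (rule sub_mono) (auto simp: A1_def)
  next
    case False
    then have ex0: "card (N v0) = 1" using deg0 v0V by force
    have ex: "card (N x) = 2" if "x \<in> V" "x \<noteq> v0" for x using False deg[OF that] that by force
    define I where "I x = {y. (y, x) \<in> A}" for x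
    have IV: "I x \<subseteq> V" for x using AV unfolding I_def by auto
    have finI: "finite (I x)" for x using IV finV finite_subset by blast
    have "\<exists>v\<in>V. card (I v) \<le> 1"
    proof (rule ccontr)
      assume "\<not> (\<exists>v\<in>V. card (I v) \<le> 1)"
      then have ge: "\<forall>v\<in>V. 2 \<le> card (I v)" by auto
      have "(\<Sum>x\<in>V. (2::nat)) \<le> (\<Sum>x\<in>V. card (I x))" using ge by (intro sum_mono) blast
      also have "\<dots> = card A" using sum_in[OF finV AV] unfolding I_def by simp
      also have "\<dots> = (\<Sum>x\<in>V. card (N x))" using sum_out[OF finV AV] od by simp
      also have "\<dots> = card (N v0) + (\<Sum>x\<in>V - {v0}. card (N x))" using finV v0V by (rule sum.remove)
      also have "\<dots> = 1 + (\<Sum>x\<in>V - {v0}. 2)" using ex0 ex by simp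
      finally have "2 * card V \<le> 1 + 2 * card (V - {v0})" by simp
      moreover have "card (V - {v0}) = card V - 1" using finV v0V by simp
      moreover have "1 \<le> card V" using finV v0V card_0_eq by fastforce
      ultimately show False by linarith
    qed
    then obtain v where vV: "v \<in> V" and vin: "card (I v) \<le> 1" by blast
    have sub_card: "card (A \<inter> X \<times> X) < card A" if "(a, b) \<in> A" "(a, b) \<notin> X \<times> X" for X a b
    proof (rule psubset_card_mono[OF finA])
      show "A \<inter> X \<times> X \<subset> A" using that by blast
    qed
    show ?thesis
    proof (cases "card (I v) = 0")
      case True
      then have I0: "I v = {}" using finI by simp
      define X where "X = V - {v}"
      have XV: "X \<subseteq> V" unfolding X_def by blast
      have odX: "out_degree (A \<inter> X \<times> X) x = card (N x)" if "x \<in> X" for x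
      proof -
        have "N x \<inter> X = N x" using I0 NV unfolding X_def N_def I_def by auto
        then show ?thesis using out_sub[OF that, of A] unfolding N_def by simp
      qed
      have "N v \<noteq> {}" using deg0 deg[OF vV] by (cases "v = v0") auto
      then obtain w where "w \<in> N v" by blast
      then have vw: "(v, w) \<in> A" unfolding N_def by simp
      have cX: "card (A \<inter> X \<times> X) < card A" using vw unfolding X_def by (intro sub_card) auto
      show ?thesis
      proof (cases "v = v0")
        case True
        obtain w0 where w0: "w0 \<in> N v0" using deg0 by (metis card.empty ex_in_conv not_one_le_zero)
        have w0V: "w0 \<in> V" and w0v: "w0 \<noteq> v0" using w0 NV loop unfolding N_def by auto
        show ?thesis
        proof (rule red[OF XV _ _ _ cX])
          show "w0 \<in> X" using w0V w0v True unfolding X_def by simp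
          show "1 \<le> out_degree (A \<inter> X \<times> X) w0" using odX[of w0] deg[OF w0V w0v] w0V w0v True
            unfolding X_def by simp
          show "\<forall>x\<in>X - {w0}. 2 \<le> out_degree (A \<inter> X \<times> X) x" using odX deg True unfolding X_def by auto
        qed
      next
        case False
        show ?thesis
        proof (rule red[OF XV _ _ _ cX])
          show "v0 \<in> X" using v0V False unfolding X_def by simp
          show "1 \<le> out_degree (A \<inter> X \<times> X) v0" using odX[of v0] deg0 v0V False unfolding X_def by simp
          show "\<forall>x\<in>X - {v0}. 2 \<le> out_degree (A \<inter> X \<times> X) x" using odX deg unfolding X_def by auto
        qed
      qed
    next
      case False
      then have "card (I v) = 1" using vin by simp
      then obtain u where Iu: "I v = {u}" by (rule card_1_singletonE)
      have uv: "(u, v) \<in> A" using Iu unfolding I_def by auto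
      have onlyu: "(y, v) \<in> A \<Longrightarrow> y = u" for y using Iu unfolding I_def by auto
      have uV: "u \<in> V" and unv: "u \<noteq> v" using uv AV loop by auto
      show ?thesis
      proof (cases "v = v0")
        case True
        define X where "X = V - {v0}"
        have XV: "X \<subseteq> V" unfolding X_def by blast
        obtain w0 where w0: "w0 \<in> N v0" using deg0 by (metis card.empty ex_in_conv not_one_le_zero)
        have "(v0, w0) \<in> A" using w0 unfolding N_def by simp
        then have cX: "card (A \<inter> X \<times> X) < card A" unfolding X_def by (intro sub_card) auto
        have unv0: "u \<noteq> v0" using unv True by simp
        have uX: "u \<in> X" using uV unv0 unfolding X_def by simp
        have odX: "out_degree (A \<inter> X \<times> X) x = card (N x)" if "x \<in> X" "x \<noteq> u" for x
        proof -
          have "N x \<inter> X = N x" using onlyu that True NV unfolding X_def N_def by auto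
          then show ?thesis using out_sub[OF that(1), of A] unfolding N_def by simp
        qed
        have "N u \<inter> X = N u - {v0}" using NV unfolding X_def by auto
        moreover have "v0 \<in> N u" using uv True unfolding N_def by simp
        ultimately have "out_degree (A \<inter> X \<times> X) u = card (N u) - 1"
          using out_sub[OF uX, of A] finN unfolding N_def by simp
        then have "1 \<le> out_degree (A \<inter> X \<times> X) u" using deg[OF uV unv0] by simp
        moreover have "\<forall>x\<in>X - {u}. 2 \<le> out_degree (A \<inter> X \<times> X) x"
          using odX deg unfolding X_def by auto
        ultimately show ?thesis using red[OF XV uX _ _ cX] by blast
      next
        case vnv0: False
        have "card (N v) = 2" using ex[OF vV vnv0] .
        then obtain v1 v2 where Nv: "N v = {v1, v2}" and v12: "v1 \<noteq> v2" by (auto simp: card_2_iff)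
        show ?thesis
        proof (cases "\<exists>t\<in>N v. t \<noteq> u \<and> t \<notin> N u")
          case True
          then obtain t where tN: "t \<in> N v" and tu: "t \<noteq> u" and tNu: "t \<notin> N u" by blast
          have vt: "(v, t) \<in> A" using tN unfolding N_def by simp
          have tV: "t \<in> V" and tv: "t \<noteq> v" using vt AV loop by auto
          define X where "X = V - {v}"
          define A1 where "A1 = insert (u, t) (A \<inter> X \<times> X)"
          have XV: "X \<subseteq> V" unfolding X_def by blast
          have uX: "u \<in> X" and tX: "t \<in> X" and v0X: "v0 \<in> X"
            using uV unv tV tv v0V vnv0 unfolding X_def by auto
          have dg1: "digraph X A1"
            using digraph_sub[OF dg XV] uX tX tu unfolding digraph_def A1_def by auto
          have N1: "{w. (x, w) \<in> A1} = (if x = u then insert t (N u - {v}) else N x)" if "x \<in> X" for x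
            using that onlyu NV unfolding A1_def N_def X_def by auto
          have od1: "out_degree A1 x = card (N x)" if "x \<in> X" for x
          proof (cases "x = u")
            case True
            have "v \<in> N u" using uv unfolding N_def by simp
            moreover have "0 < card (N u)" using \<open>v \<in> N u\<close> finN[of u] card_gt_0_iff by blast
            ultimately have "card (insert t (N u - {v})) = card (N u)"
              using tNu finN by (simp add: card_Diff_singleton)
            then show ?thesis using N1[OF that] True unfolding out_degree_def by simp
          next
            case False
            then show ?thesis using N1[OF that] unfolding out_degree_def N_def by simp
          qed
          have c1: "card A1 < card A"
          proof -
            have f1: "finite (A \<inter> X \<times> X)" using finA by simp
            have "(v, t) \<notin> A \<inter> X \<times> X" "(u, v) \<notin> insert (v, t) (A \<inter> X \<times> X)"
              using unv unfolding X_def by auto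
            then have "card (insert (u, v) (insert (v, t) (A \<inter> X \<times> X))) = card (A \<inter> X \<times> X) + 2"
              using f1 by simp
            moreover have "insert (u, v) (insert (v, t) (A \<inter> X \<times> X)) \<subseteq> A" using uv vt by blast
            ultimately have "card (A \<inter> X \<times> X) + 2 \<le> card A" using finA by (metis card_mono)
            moreover have "card A1 \<le> card (A \<inter> X \<times> X) + 1" unfolding A1_def using f1
              by (metis Suc_eq_plus1 card_insert_le_m1 card_insert_if le_refl nat_le_linear not_less_eq_eq)
            ultimately show ?thesis by linarith
          qed
          have "contains_subdivision K3_bi_minus_e_V K3_bi_minus_e_A X A1"
          proof (rule IH[OF c1 dg1 v0X])
            show "1 \<le> out_degree A1 v0" using od1[OF v0X] deg0 by simp
            show "\<forall>x\<in>X - {v0}. 2 \<le> out_degree A1 x" using od1 deg XV by auto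
          qed
          then show ?thesis
          proof (rule lift[OF _ XV vV _ uv vt _ K3A_sub])
            show "v \<notin> X" unfolding X_def by simp
            show "A1 \<subseteq> A \<union> {(u, t)}" unfolding A1_def by blast
          qed
        next
          case False
          then have bad: "\<And>t. t \<in> N v \<Longrightarrow> t = u \<or> t \<in> N u" by blast
          have vNu: "v \<in> N u" using uv unfolding N_def by simp
          have v1v: "v1 \<noteq> v" and v2v: "v2 \<noteq> v" using Nv loop unfolding N_def by (metis insertI1 insertI2 mem_Collect_eq)+
          have unv0: "u \<noteq> v0"
          proof
            assume "u = v0"
            then have "card (N u) = 1" using ex0 by simp
            then obtain z where "N u = {z}" by (rule card_1_singletonE)
            then have "N u = {v}" using vNu by simp
            then have "v1 = u" "v2 = u" using bad[of v1] bad[of v2] Nv v1v v2v by auto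
            then show False using v12 by simp
          qed
          have "card (N u) = 2" using ex[OF uV unv0] .
          then obtain p q where Nu: "N u = {p, q}" and pq: "p \<noteq> q" by (auto simp: card_2_iff)
          obtain u' where Nu': "N u = {v, u'}" and u'v: "u' \<noteq> v"
          proof (cases "p = v")
            case True
            then show ?thesis using that[of q] Nu pq by simp
          next
            case False
            then have "q = v" using vNu Nu by auto
            then show ?thesis using that[of p] Nu pq by auto
          qed
          have "v1 \<in> {u, u'}" "v2 \<in> {u, u'}" using bad[of v1] bad[of v2] Nv Nu' v1v v2v by auto
          then have "u \<in> N v" "u' \<in> N v" using Nv v12 by auto
          then have vu: "(v, u) \<in> A" and vu': "(v, u') \<in> A" unfolding N_def by simp_all
          have uu': "(u, u') \<in> A" using Nu' unfolding N_def by auto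
          have u'V: "u' \<in> V" and u'u: "u' \<noteq> u" using uu' AV loop by auto
          define r where "r a b \<longleftrightarrow> (a, b) \<in> A \<and> b \<noteq> v" for a b
          define R where "R = {x. r\<^sup>*\<^sup>* u' x}"
          show ?thesis
          proof (cases "u \<in> R")
            case True
            then have "(\<lambda>a b. (a, b) \<in> A \<and> b \<noteq> v)\<^sup>*\<^sup>* u' u" unfolding R_def r_def by simp
            then obtain Q where Q: "dipath A Q" "hd Q = u'" "last Q = u" "v \<notin> set Q"
              "\<forall>z\<in>set Q. z = u' \<or> (\<exists>a. (a, z) \<in> A)"
              using u'u u'v by (rule reach_path) blast+
            have "set Q \<subseteq> V"
            proof
              fix z assume "z \<in> set Q"
              then have "z = u' \<or> (\<exists>a. (a, z) \<in> A)" using Q(5) by blast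
              then show "z \<in> V" using u'V AV by auto
            qed
            then show ?thesis
              by (rule k3_direct[OF Q(1-4) _ uu' uv vu vu' u'u[symmetric] unv u'v uV u'V vV])
          next
            case False
            have RV: "R \<subseteq> V"
            proof
              fix x assume "x \<in> R"
              then have "r\<^sup>*\<^sup>* u' x" unfolding R_def by simp
              then show "x \<in> V"
                by (induction rule: rtranclp_induct) (use u'V AV in \<open>auto simp: r_def\<close>)
            qed
            have closed: "N x \<subseteq> R" if "x \<in> R" for x
            proof
              fix w assume "w \<in> N x"
              then have xw: "(x, w) \<in> A" unfolding N_def by simp
              have "w \<noteq> v"
              proof
                assume "w = v"
                then have "x = u" using onlyu xw by simp
                then show False using False that by simp
              qed
              then have "r x w" using xw unfolding r_def by simp
              then show "w \<in> R" using that unfolding R_def by (simp add: rtranclp.rtrancl_into_rtrancl)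
            qed
            have odR: "out_degree (A \<inter> R \<times> R) x = card (N x)" if "x \<in> R" for x
            proof -
              have "N x \<inter> R = N x" using closed[OF that] by blast
              then show ?thesis using out_sub[OF that, of A] unfolding N_def by simp
            qed
            have u'R: "u' \<in> R" unfolding R_def by simp
            have cR: "card (A \<inter> R \<times> R) < card A" using uv False by (intro sub_card) auto
            show ?thesis
            proof (cases "v0 \<in> R")
              case True
              show ?thesis
              proof (rule red[OF RV True _ _ cR])
                show "1 \<le> out_degree (A \<inter> R \<times> R) v0" using odR[OF True] deg0 by simp
                show "\<forall>x\<in>R - {v0}. 2 \<le> out_degree (A \<inter> R \<times> R) x" using odR deg RV by auto
              qed
            next
              case False
              show ?thesis
              proof (rule red[OF RV u'R _ _ cR])
                have "u' \<noteq> v0" using False u'R by blast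
                then show "1 \<le> out_degree (A \<inter> R \<times> R) u'" using odR[OF u'R] deg[OF u'V] by simp
                show "\<forall>x\<in>R - {u'}. 2 \<le> out_degree (A \<inter> R \<times> R) x" using odR deg RV False by auto
              qed
            qed
          qed
        qed
      qed
    qed
  qed
qed

theorem proposition4p1:
  fixes V :: "'a set" and A :: "('a \<times> 'a) set" and v0 :: 'a
  assumes "digraph V A"
    and "v0 \<in> V"
    and "out_degree A v0 \<ge> 1"
    and "\<forall>v \<in> V - {v0}. out_degree A v \<ge> 2"
  shows "contains_subdivision K3_bi_minus_e_V K3_bi_minus_e_A V A"
  using main[OF assms] .

end
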